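(* Let $m,k\in\mathbb{Z}$, let $(H,\alpha)$ be a monoidal Hom-bialgebra and $(C,\beta)$ a monoidal Hom-algebra which is a left weak $(H,\alpha)$-Hom-module algebra via $h\otimes c\mapsto h\rightarrow c$ and a left $(H,\alpha)$-Hom-comodule coalgebra with coaction $c\mapsto c_{(-1)}\otimes c_{(0)}$; let $\sigma:H\otimes H\to C$ be a convolution invertible linear map. Let $X=C\otimes H$ with multiplication $(a\otimes h)(b\otimes g)=a[(\alpha^{m}(h_{11})\rightarrow\beta^{-2}(b))\sigma(\alpha^{k+1}(h_{12}),\alpha^{k}(g_{1}))]\otimes\alpha(h_{2}g_{2})$, unit $1_C\otimes1_H$, comultiplication $\Delta(a\otimes h)=a_{1}\otimes\alpha^{m}(a_{2(-1)})\alpha^{-1}(h_{1})\otimes\beta(a_{2(0)})\otimes h_{2}$, counit $\varepsilon(a)\varepsilon(h)$ and structure map $\xi=\beta\otimes\alpha$, and assume $(X,\xi)$ is a monoidal Hom-bialgebra. Define $\varphi^r:X\otimes H\to X$ by $$\varphi^{r}((a\otimes h)\otimes l)=a\,\sigma(\alpha^{k+1}(h_{1}),\alpha^{k+1-m}(l_{1}))\otimes\alpha(h_{2})\alpha^{1-m}(l_{2}),$$ and $\bar\sigma:H\otimes H\to X$ by $\bar\sigma(h\otimes l)=\sigma(\alpha^{k+1-m}(h),\alpha^{k+1-m}(l))\otimes1_H$. Then $(X,\xi,\varphi^r)$ is a right $(H,\alpha,\bar\sigma)$-Hom module, i.e. for all $l,g\in H$ and $x\in X$, $$\varphi^r(\varphi^r(x\otimes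 l)\otimes\alpha(g))=\xi(x)\,\varphi^r(\bar\sigma(l_1,g_1)\otimes l_2g_2)\quad\text{and}\quad\varphi^r(x\otimes1_H)=\xi(x),$$ where juxtaposition is the multiplication of $X$.
   Context: Field $k$; Sweedler notation. Monoidal Hom-algebra $(A,\beta)$: $\beta(a)(bc)=(ab)\beta(c)$, $\beta(ab)=\beta(a)\beta(b)$, $a1=1a=\beta(a)$, $\beta(1)=1$, $\beta$ a linear automorphism. Monoidal Hom-coalgebra $(C,\gamma)$: $\gamma^{-1}(c_1)\otimes\Delta(c_2)=\Delta(c_1)\otimes\gamma^{-1}(c_2)$, $\Delta\gamma=(\gamma\otimes\gamma)\Delta$, $c_1\varepsilon(c_2)=\gamma^{-1}(c)=\varepsilon(c_1)c_2$, $\varepsilon\gamma=\varepsilon$. Monoidal Hom-bialgebra: both with the same structure map and $\Delta,\varepsilon$ multiplicative and unital. Left weak $(H,\alpha)$-Hom-module algebra: $h\rightarrow(ab)=(h_1\rightarrow a)(h_2\rightarrow b)$, $h\rightarrow1=\varepsilon(h)1$. Left $(H,\alpha)$-Hom-comodule $(M,\mu)$: $\Delta_H(x_{(-1)})\otimes\mu^{-1}(x_{(0)})=\alpha^{-1}(x_{(-1)})\otimes x_{(0)(-1)}\otimes x_{(0)(0)}$, $\rho(\mu(x))=\alpha(x_{(-1)})\otimes\mu(x_{(0)})$, $\varepsilon(x_{(-1)})x_{(0)}=\mu^{-1}(x)$; Hom-comodule coalgebra: moreover $b_{(-1)}\otimes b_{(0)1}\otimes b_{(0)2}=b_{1(-1)}b_{2(-1)}\otimes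 b_{1(0)}\otimes b_{2(0)}$, $\varepsilon(b_{(0)})b_{(-1)}=\varepsilon(b)1_H$. $\sigma$ convolution invertible means there is a linear $\sigma^{-1}:H\otimes H\to C$ with $\sigma(h_1,l_1)\sigma^{-1}(h_2,l_2)=\varepsilon(h)\varepsilon(l)1_C=\sigma^{-1}(h_1,l_1)\sigma(h_2,l_2)$. *)

theory Defs
  imports Complex_Main
begin

text \<open>An element of a tensor product V1 (x) ... (x) Vn of k-vector spaces is represented by a
finite list of (nested) tuples, standing for the sum of the corresponding pure tensors.
Two such representations denote the same tensor iff they agree under all products of linear
functionals f1(v1)*...*fn(vn) (products of linear functionals separate the points of a
tensor product of vector spaces).\<close>

definition lins :: "('k::field \<Rightarrow> 'a::ab_group_add \<Rightarrow> 'a) \<Rightarrow> ('a \<Rightarrow> 'k) set" where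
  "lins s = {f. Vector_Spaces.linear s ((*) :: 'k \<Rightarrow> 'k \<Rightarrow> 'k) f}"

definition tprod :: "('a \<Rightarrow> 'k::times) set \<Rightarrow> ('b \<Rightarrow> 'k) set \<Rightarrow> ('a \<times> 'b \<Rightarrow> 'k) set" where
  "tprod A B = {(\<lambda>(x, y). F x * G y) | F G. F \<in> A \<and> G \<in> B}"

definition teq :: "('a \<Rightarrow> 'k::monoid_add) set \<Rightarrow> 'a list \<Rightarrow> 'a list \<Rightarrow> bool" where
  "teq T xs ys \<longleftrightarrow> (\<forall>F\<in>T. sum_list (map F xs) = sum_list (map F ys))"

definition zpow :: "('a \<Rightarrow> 'a) \<Rightarrow> int \<Rightarrow> 'a \<Rightarrow> 'a" where
  "zpow f n = (if 0 \<le> n then f ^^ nat n else inv f ^^ nat (- n))"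

definition bilin :: "('k::field \<Rightarrow> 'a::ab_group_add \<Rightarrow> 'a) \<Rightarrow> ('k \<Rightarrow> 'b::ab_group_add \<Rightarrow> 'b)
    \<Rightarrow> ('k \<Rightarrow> 'c::ab_group_add \<Rightarrow> 'c) \<Rightarrow> ('a \<Rightarrow> 'b \<Rightarrow> 'c) \<Rightarrow> bool" where
  "bilin sa sb sc f \<longleftrightarrow> (\<forall>y. Vector_Spaces.linear sa sc (\<lambda>x. f x y)) \<and> (\<forall>x. Vector_Spaces.linear sb sc (f x))"

definition hom_algebra :: "('k::field \<Rightarrow> 'a::ab_group_add \<Rightarrow> 'a) \<Rightarrow> ('a \<Rightarrow> 'a \<Rightarrow> 'a) \<Rightarrow> 'a
    \<Rightarrow> ('a \<Rightarrow> 'a) \<Rightarrow> bool" where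
  "hom_algebra s mu u b \<longleftrightarrow>
     Vector_Spaces.vector_space s \<and> bilin s s s mu \<and> Vector_Spaces.linear s s b \<and> bij b \<and>
     (\<forall>x y z. mu (b x) (mu y z) = mu (mu x y) (b z)) \<and>
     (\<forall>x y. b (mu x y) = mu (b x) (b y)) \<and>
     (\<forall>x. mu x u = b x \<and> mu u x = b x) \<and> b u = u"

definition hom_coalgebra :: "('k::field \<Rightarrow> 'a::ab_group_add \<Rightarrow> 'a) \<Rightarrow> ('a \<Rightarrow> ('a \<times> 'a) list)
    \<Rightarrow> ('a \<Rightarrow> 'k) \<Rightarrow> ('a \<Rightarrow> 'a) \<Rightarrow> bool" where
  "hom_coalgebra s D e g \<longleftrightarrow>
     Vector_Spaces.vector_space s \<and> Vector_Spaces.linear s s g \<and> bij g \<and> e \<in> lins s \<and>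
     (\<forall>x y. teq (tprod (lins s) (lins s)) (D (x + y)) (D x @ D y)) \<and>
     (\<forall>c x. teq (tprod (lins s) (lins s)) (D (s c x)) (map (\<lambda>(p, q). (s c p, q)) (D x))) \<and>
     (\<forall>x. teq (tprod (lins s) (tprod (lins s) (lins s)))
            [(inv g p, q, r). (p, y) \<leftarrow> D x, (q, r) \<leftarrow> D y]
            [(p, q, inv g y). (z, y) \<leftarrow> D x, (p, q) \<leftarrow> D z]) \<and>
     (\<forall>x. teq (tprod (lins s) (lins s)) (D (g x)) (map (\<lambda>(p, q). (g p, g q)) (D x))) \<and>
     (\<forall>x. sum_list [s (e q) p. (p, q) \<leftarrow> D x] = inv g x \<and>
          sum_list [s (e p) q. (p, q) \<leftarrow> D x] = inv g x) \<and>
     (\<forall>x. e (g x) = e x)"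

definition hom_bialgebra :: "('k::field \<Rightarrow> 'a::ab_group_add \<Rightarrow> 'a) \<Rightarrow> ('a \<Rightarrow> 'a \<Rightarrow> 'a) \<Rightarrow> 'a
    \<Rightarrow> ('a \<Rightarrow> ('a \<times> 'a) list) \<Rightarrow> ('a \<Rightarrow> 'k) \<Rightarrow> ('a \<Rightarrow> 'a) \<Rightarrow> bool" where
  "hom_bialgebra s mu u D e a \<longleftrightarrow>
     hom_algebra s mu u a \<and> hom_coalgebra s D e a \<and>
     (\<forall>x y. teq (tprod (lins s) (lins s)) (D (mu x y))
              [(mu p p', mu q q'). (p, q) \<leftarrow> D x, (p', q') \<leftarrow> D y]) \<and>
     teq (tprod (lins s) (lins s)) (D u) [(u, u)] \<and>
     (\<forall>x y. e (mu x y) = e x * e y) \<and> e u = 1"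

definition weak_hom_module_algebra :: "('k::field \<Rightarrow> 'h::ab_group_add \<Rightarrow> 'h) \<Rightarrow> ('h \<Rightarrow> ('h \<times> 'h) list)
    \<Rightarrow> ('h \<Rightarrow> 'k) \<Rightarrow> ('k \<Rightarrow> 'c::ab_group_add \<Rightarrow> 'c) \<Rightarrow> ('c \<Rightarrow> 'c \<Rightarrow> 'c) \<Rightarrow> 'c
    \<Rightarrow> ('h \<Rightarrow> 'c \<Rightarrow> 'c) \<Rightarrow> bool" where
  "weak_hom_module_algebra sH DH eH sC mC uC act \<longleftrightarrow>
     bilin sH sC sC act \<and>
     (\<forall>h a b. act h (mC a b) = sum_list [mC (act p a) (act q b). (p, q) \<leftarrow> DH h]) \<and>
     (\<forall>h. act h uC = sC (eH h) uC)"

definition hom_comodule :: "('k::field \<Rightarrow> 'h::ab_group_add \<Rightarrow> 'h) \<Rightarrow> ('h \<Rightarrow> ('h \<times> 'h) list)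
    \<Rightarrow> ('h \<Rightarrow> 'k) \<Rightarrow> ('h \<Rightarrow> 'h) \<Rightarrow> ('k \<Rightarrow> 'm::ab_group_add \<Rightarrow> 'm) \<Rightarrow> ('m \<Rightarrow> 'm)
    \<Rightarrow> ('m \<Rightarrow> ('h \<times> 'm) list) \<Rightarrow> bool" where
  "hom_comodule sH DH eH al sM mu rho \<longleftrightarrow>
     Vector_Spaces.vector_space sM \<and> Vector_Spaces.linear sM sM mu \<and> bij mu \<and>
     (\<forall>x y. teq (tprod (lins sH) (lins sM)) (rho (x + y)) (rho x @ rho y)) \<and>
     (\<forall>c x. teq (tprod (lins sH) (lins sM)) (rho (sM c x)) (map (\<lambda>(h, y). (h, sM c y)) (rho x))) \<and>
     (\<forall>x. teq (tprod (lins sH) (tprod (lins sH) (lins sM)))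
            [(p, q, inv mu y). (h, y) \<leftarrow> rho x, (p, q) \<leftarrow> DH h]
            [(inv al h, p, z). (h, y) \<leftarrow> rho x, (p, z) \<leftarrow> rho y]) \<and>
     (\<forall>x. teq (tprod (lins sH) (lins sM)) (rho (mu x)) (map (\<lambda>(h, y). (al h, mu y)) (rho x))) \<and>
     (\<forall>x. sum_list [sM (eH h) y. (h, y) \<leftarrow> rho x] = inv mu x)"

definition hom_comodule_coalgebra :: "('k::field \<Rightarrow> 'h::ab_group_add \<Rightarrow> 'h) \<Rightarrow> ('h \<Rightarrow> 'h \<Rightarrow> 'h) \<Rightarrow> 'h
    \<Rightarrow> ('h \<Rightarrow> ('h \<times> 'h) list) \<Rightarrow> ('h \<Rightarrow> 'k) \<Rightarrow> ('h \<Rightarrow> 'h)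
    \<Rightarrow> ('k \<Rightarrow> 'c::ab_group_add \<Rightarrow> 'c) \<Rightarrow> ('c \<Rightarrow> ('c \<times> 'c) list) \<Rightarrow> ('c \<Rightarrow> 'k) \<Rightarrow> ('c \<Rightarrow> 'c)
    \<Rightarrow> ('c \<Rightarrow> ('h \<times> 'c) list) \<Rightarrow> bool" where
  "hom_comodule_coalgebra sH mH uH DH eH al sC DC eC be rho \<longleftrightarrow>
     hom_coalgebra sC DC eC be \<and> hom_comodule sH DH eH al sC be rho \<and>
     (\<forall>b. teq (tprod (lins sH) (tprod (lins sC) (lins sC)))
            [(h, p, q). (h, y) \<leftarrow> rho b, (p, q) \<leftarrow> DC y]
            [(mH h h', y, y'). (b1, b2) \<leftarrow> DC b, (h, y) \<leftarrow> rho b1, (h', y') \<leftarrow> rho b2]) \<and>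
     (\<forall>b. sum_list [sH (eC y) h. (h, y) \<leftarrow> rho b] = sH (eC b) uH)"

definition conv_inverse :: "('h \<Rightarrow> ('h \<times> 'h) list) \<Rightarrow> ('h \<Rightarrow> 'k::field)
    \<Rightarrow> ('k \<Rightarrow> 'c::ab_group_add \<Rightarrow> 'c) \<Rightarrow> ('c \<Rightarrow> 'c \<Rightarrow> 'c) \<Rightarrow> 'c
    \<Rightarrow> ('h \<Rightarrow> 'h \<Rightarrow> 'c) \<Rightarrow> ('h \<Rightarrow> 'h \<Rightarrow> 'c) \<Rightarrow> bool" where
  "conv_inverse DH eH sC mC uC sg sgi \<longleftrightarrow>
     (\<forall>h l. sum_list [mC (sg h1 l1) (sgi h2 l2). (h1, h2) \<leftarrow> DH h, (l1, l2) \<leftarrow> DH l]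
              = sC (eH h * eH l) uC \<and>
            sum_list [mC (sgi h1 l1) (sg h2 l2). (h1, h2) \<leftarrow> DH h, (l1, l2) \<leftarrow> DH l]
              = sC (eH h * eH l) uC)"

text \<open>Elements of X = C (x) H are lists of pairs (a, h), standing for sum of a (x) h.
Elements of X (x) X are lists of pairs of pure tensors.\<close>

definition multX :: "('h \<Rightarrow> 'h \<Rightarrow> 'h) \<Rightarrow> ('h \<Rightarrow> ('h \<times> 'h) list) \<Rightarrow> ('h \<Rightarrow> 'h)
    \<Rightarrow> ('c \<Rightarrow> 'c \<Rightarrow> 'c) \<Rightarrow> ('c \<Rightarrow> 'c) \<Rightarrow> ('h \<Rightarrow> 'c \<Rightarrow> 'c) \<Rightarrow> ('h \<Rightarrow> 'h \<Rightarrow> 'c)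
    \<Rightarrow> int \<Rightarrow> int \<Rightarrow> ('c \<times> 'h) list \<Rightarrow> ('c \<times> 'h) list \<Rightarrow> ('c \<times> 'h) list" where
  "multX mH DH al mC be act sg m k x y =
     [(mC a (mC (act (zpow al m h11) (zpow be (-2) b)) (sg (zpow al (k + 1) h12) (zpow al k g1))),
       al (mH h2 g2)).
       (a, h) \<leftarrow> x, (b, g) \<leftarrow> y, (h1, h2) \<leftarrow> DH h, (h11, h12) \<leftarrow> DH h1, (g1, g2) \<leftarrow> DH g]"

definition copX :: "('h \<Rightarrow> 'h \<Rightarrow> 'h) \<Rightarrow> ('h \<Rightarrow> ('h \<times> 'h) list) \<Rightarrow> ('h \<Rightarrow> 'h)
    \<Rightarrow> ('c \<Rightarrow> ('c \<times> 'c) list) \<Rightarrow> ('c \<Rightarrow> 'c) \<Rightarrow> ('c \<Rightarrow> ('h \<times> 'c) list) \<Rightarrow> int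
    \<Rightarrow> ('c \<times> 'h) list \<Rightarrow> (('c \<times> 'h) \<times> ('c \<times> 'h)) list" where
  "copX mH DH al DC be rho m x =
     [((a1, mH (zpow al m hm) (zpow al (-1) h1)), (be a20, h2)).
       (a, h) \<leftarrow> x, (a1, a2) \<leftarrow> DC a, (hm, a20) \<leftarrow> rho a2, (h1, h2) \<leftarrow> DH h]"

definition counitX :: "('c \<Rightarrow> 'k::comm_semiring_1) \<Rightarrow> ('h \<Rightarrow> 'k) \<Rightarrow> ('c \<times> 'h) list \<Rightarrow> 'k" where
  "counitX eC eH x = sum_list [eC a * eH h. (a, h) \<leftarrow> x]"

definition xi1 :: "('c \<Rightarrow> 'c) \<Rightarrow> ('h \<Rightarrow> 'h) \<Rightarrow> 'c \<times> 'h \<Rightarrow> 'c \<times> 'h" where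
  "xi1 be al = (\<lambda>(a, h). (be a, al h))"

definition xiX :: "('c \<Rightarrow> 'c) \<Rightarrow> ('h \<Rightarrow> 'h) \<Rightarrow> ('c \<times> 'h) list \<Rightarrow> ('c \<times> 'h) list" where
  "xiX be al x = map (xi1 be al) x"

definition X_hom_bialgebra :: "('k::field \<Rightarrow> 'c::ab_group_add \<Rightarrow> 'c) \<Rightarrow> ('k \<Rightarrow> 'h::ab_group_add \<Rightarrow> 'h)
    \<Rightarrow> (('c \<times> 'h) list \<Rightarrow> ('c \<times> 'h) list \<Rightarrow> ('c \<times> 'h) list) \<Rightarrow> ('c \<times> 'h)
    \<Rightarrow> (('c \<times> 'h) list \<Rightarrow> (('c \<times> 'h) \<times> ('c \<times> 'h)) list) \<Rightarrow> (('c \<times> 'h) list \<Rightarrow> 'k)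
    \<Rightarrow> ('c \<Rightarrow> 'c) \<Rightarrow> ('h \<Rightarrow> 'h) \<Rightarrow> bool" where
  "X_hom_bialgebra sC sH mu u D e be al \<longleftrightarrow>
    (let TX = tprod (lins sC) (lins sH); xi = xiX be al; xii = xi1 (inv be) (inv al) in
     (\<forall>x y z. teq TX (mu (xi x) (mu y z)) (mu (mu x y) (xi z))) \<and>
     (\<forall>x y. teq TX (xi (mu x y)) (mu (xi x) (xi y))) \<and>
     (\<forall>x. teq TX (mu x [u]) (xi x) \<and> teq TX (mu [u] x) (xi x)) \<and>
     teq TX (xi [u]) [u] \<and>
     (\<forall>x. teq (tprod TX (tprod TX TX))
            [(xii p, q, r). (p, y) \<leftarrow> D x, (q, r) \<leftarrow> D [y]]
            [(p, q, xii y). (z, y) \<leftarrow> D x, (p, q) \<leftarrow> D [z]]) \<and>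
     (\<forall>x. teq (tprod TX TX) (D (xi x)) (map (\<lambda>(p, q). (xi1 be al p, xi1 be al q)) (D x))) \<and>
     (\<forall>x. teq TX [(sC (e [q]) (fst p), snd p). (p, q) \<leftarrow> D x] (map xii x) \<and>
          teq TX [(sC (e [p]) (fst q), snd q). (p, q) \<leftarrow> D x] (map xii x)) \<and>
     (\<forall>x. e (xi x) = e x) \<and>
     (\<forall>x y. teq (tprod TX TX) (D (mu x y))
              [(v, w). (p, q) \<leftarrow> D x, (p', q') \<leftarrow> D y, v \<leftarrow> mu [p] [p'], w \<leftarrow> mu [q] [q']]) \<and>
     teq (tprod TX TX) (D [u]) [(u, u)] \<and>
     (\<forall>x y. e (mu x y) = e x * e y) \<and> e [u] = 1)"

definition phir :: "('h \<Rightarrow> 'h \<Rightarrow> 'h) \<Rightarrow> ('h \<Rightarrow> ('h \<times> 'h) list) \<Rightarrow> ('h \<Rightarrow> 'h)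
    \<Rightarrow> ('c \<Rightarrow> 'c \<Rightarrow> 'c) \<Rightarrow> ('h \<Rightarrow> 'h \<Rightarrow> 'c) \<Rightarrow> int \<Rightarrow> int
    \<Rightarrow> ('c \<times> 'h) list \<Rightarrow> 'h \<Rightarrow> ('c \<times> 'h) list" where
  "phir mH DH al mC sg m k x l =
     [(mC a (sg (zpow al (k + 1) h1) (zpow al (k + 1 - m) l1)), mH (al h2) (zpow al (1 - m) l2)).
       (a, h) \<leftarrow> x, (h1, h2) \<leftarrow> DH h, (l1, l2) \<leftarrow> DH l]"

definition sigbar :: "'h \<Rightarrow> ('h \<Rightarrow> 'h) \<Rightarrow> ('h \<Rightarrow> 'h \<Rightarrow> 'c) \<Rightarrow> int \<Rightarrow> int
    \<Rightarrow> 'h \<Rightarrow> 'h \<Rightarrow> ('c \<times> 'h) list" where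
  "sigbar uH al sg m k h l = [(sg (zpow al (k + 1 - m) h) (zpow al (k + 1 - m) l), uH)]"

end

theory Submission
  imports Defs
begin

lemma vs_field: "Vector_Spaces.vector_space ((*) :: 'k::field \<Rightarrow> 'k \<Rightarrow> 'k)"
  by unfold_locales (simp_all add: algebra_simps)

definition lin :: "('k::field \<Rightarrow> 'a::ab_group_add \<Rightarrow> 'a) \<Rightarrow> ('a \<Rightarrow> 'k) \<Rightarrow> bool" where
  "lin s f \<longleftrightarrow> (\<forall>x y. f (x + y) = f x + f y) \<and> (\<forall>c x. f (s c x) = c * f x)"

lemma lins_iff: "Vector_Spaces.vector_space s \<Longrightarrow> f \<in> lins s \<longleftrightarrow> lin s f"
  unfolding lins_def lin_def by (simp add: Vector_Spaces.linear_iff vs_field)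

lemma lin_0: "lin s f \<Longrightarrow> f 0 = 0"
  unfolding lin_def by (metis add_cancel_right_right add_0)

lemma lin_sum: "lin s f \<Longrightarrow> f (sum g B) = (\<Sum>b\<in>B. f (g b))"
proof (induction B rule: infinite_finite_induct)
  case (infinite A) then show ?case by (simp add: lin_0)
next
  case empty then show ?case by (simp add: lin_0)
next
  case (insert x F) then show ?case by (simp add: lin_def)
qed

lemma lin_sum_list: "lin s f \<Longrightarrow> f (sum_list xs) = sum_list (map f xs)"
  by (induction xs) (auto simp: lin_0 lin_def)

definition bs :: "('a \<Rightarrow> 'b \<Rightarrow> 'k::monoid_add) \<Rightarrow> ('a \<times> 'b) list \<Rightarrow> 'k" where
  "bs F xs = sum_list (map (case_prod F) xs)"

lemma dual_basis:
  fixes s :: "'k::field \<Rightarrow> 'a::ab_group_add \<Rightarrow> 'a"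
  assumes vs: "Vector_Spaces.vector_space s" and fin: "finite X"
  obtains B Fs where "finite B" "\<forall>b\<in>B. Fs b \<in> lins s" "\<forall>x\<in>X. x = (\<Sum>b\<in>B. s (Fs b x) b)"
proof -
  interpret V: vector_space s by fact
  interpret P: vector_space_pair s "(*) :: 'k \<Rightarrow> 'k \<Rightarrow> 'k"
    by (simp add: vector_space_pair_def vs vs_field)
  obtain B where B: "B \<subseteq> X" "V.independent B" "X \<subseteq> V.span B"
    by (rule V.maximal_independent_subset)
  have fB: "finite B" using B(1) fin finite_subset by blast
  define Fs where "Fs b = P.construct B (\<lambda>b'. if b' = b then 1 else (0::'k))" for b
  have lF: "Fs b \<in> lins s" for b
    unfolding Fs_def lins_def using P.linear_construct[OF B(2)] by simp
  have linF: "lin s (Fs b)" for b using lF[of b] lins_iff[OF vs] by blast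
  have "x = (\<Sum>b\<in>B. s (Fs b x) b)" if "x \<in> X" for x
  proof -
    have "x \<in> V.span B" using that B by blast
    then obtain u where u: "x = (\<Sum>v\<in>B. s (u v) v)"
      using V.span_finite[OF fB] by auto
    have "Fs b x = u b" if "b \<in> B" for b
    proof -
      have "Fs b x = (\<Sum>v\<in>B. Fs b (s (u v) v))" using u lin_sum[OF linF] by metis
      also have "\<dots> = (\<Sum>v\<in>B. u v * (if v = b then 1 else 0))"
        using linF[of b] P.construct_basis[OF B(2)] unfolding lin_def Fs_def
        by (intro sum.cong) auto
      also have "\<dots> = u b" using that fB by (simp add: if_distrib sum.delta cong: if_cong)
      finally show ?thesis .
    qed
    then show ?thesis using u by (metis (no_types, lifting) sum.cong)
  qed
  then show ?thesis using that fB lF by blast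
qed

lemma separate:
  fixes s :: "'k::field \<Rightarrow> 'a::ab_group_add \<Rightarrow> 'a"
  assumes vs: "Vector_Spaces.vector_space s" and eq: "\<And>F. F \<in> lins s \<Longrightarrow> F x = F y"
  shows "x = y"
proof -
  obtain B Fs where "finite B" "\<forall>b\<in>B. Fs b \<in> lins s" "\<forall>z\<in>{x,y}. z = (\<Sum>b\<in>B. s (Fs b z) b)"
    using dual_basis[OF vs, of "{x,y}"] by auto
  then show ?thesis using eq by (metis (no_types, lifting) insertCI sum.cong)
qed

lemma teq_bil:
  fixes sV :: "'k::field \<Rightarrow> 'a::ab_group_add \<Rightarrow> 'a" and sW :: "'k \<Rightarrow> 'b::ab_group_add \<Rightarrow> 'b"
  assumes vV: "Vector_Spaces.vector_space sV" and vW: "Vector_Spaces.vector_space sW"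
    and te: "teq (tprod (lins sV) (lins sW)) xs ys"
    and l1: "\<And>w. lin sV (\<lambda>v. Phi v w)" and l2: "\<And>v. lin sW (Phi v)"
  shows "bs Phi xs = bs Phi ys"
proof -
  obtain B Fs where fB: "finite B" and lF: "\<forall>b\<in>B. Fs b \<in> lins sV"
    and rep: "\<forall>x\<in>fst ` set (xs @ ys). x = (\<Sum>b\<in>B. sV (Fs b x) b)"
    using dual_basis[OF vV, of "fst ` set (xs @ ys)"] by auto
  define T where "T zs b = sum_list (map (\<lambda>(v, w). sW (Fs b v) w) zs)" for zs b
  have key: "set zs \<subseteq> set (xs @ ys) \<Longrightarrow> bs Phi zs = (\<Sum>b\<in>B. Phi b (T zs b))" for zs
  proof (induction zs)
    case Nil then show ?case using lin_0[OF l2] by (simp add: bs_def T_def)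
  next
    case (Cons z zs)
    obtain v w where z: "z = (v, w)" by fastforce
    have "v \<in> fst ` set (xs @ ys)" using Cons.prems z by force
    then have "Phi v w = Phi (\<Sum>b\<in>B. sV (Fs b v) b) w" using rep by metis
    also have "\<dots> = (\<Sum>b\<in>B. Phi (sV (Fs b v) b) w)" using lin_sum[OF l1] by blast
    also have "\<dots> = (\<Sum>b\<in>B. Phi b (sW (Fs b v) w))" using l1 l2 unfolding lin_def by simp
    finally have "Phi v w = (\<Sum>b\<in>B. Phi b (sW (Fs b v) w))" .
    moreover have "T (z # zs) b = sW (Fs b v) w + T zs b" for b by (simp add: T_def z)
    ultimately show ?case using Cons l2 unfolding lin_def by (simp add: bs_def z sum.distrib)
  qed
  have "T xs b = T ys b" if "b \<in> B" for b
  proof (rule separate[OF vW])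
    fix G assume G: "G \<in> lins sW"
    have lG: "lin sW G" using G lins_iff[OF vW] by blast
    have *: "G (T zs b) = sum_list (map (\<lambda>(v, w). Fs b v * G w) zs)" for zs
      unfolding T_def lin_sum_list[OF lG] map_map
      using lG unfolding lin_def by (intro arg_cong[where f=sum_list] map_cong) auto
    have "(\<lambda>(v, w). Fs b v * G w) \<in> tprod (lins sV) (lins sW)"
      unfolding tprod_def using lF that G by blast
    then show "G (T xs b) = G (T ys b)" using te unfolding * teq_def by auto
  qed
  then show ?thesis using key[of xs] key[of ys] by simp
qed

lemma bs_Nil[simp]: "bs F [] = 0" by (simp add: bs_def)
lemma bs_Cons[simp]: "bs F ((a, b) # xs) = F a b + bs F xs" by (simp add: bs_def)
lemma bs_append[simp]: "bs F (xs @ ys) = bs F xs + bs F ys" by (simp add: bs_def)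
lemma bs_concat_map[simp]: "bs F (concat (map (\<lambda>(a, b). L a b) xs)) = bs (\<lambda>a b. bs F (L a b)) xs"
  by (induction xs) (auto simp: bs_def)
lemma bs_concat_map': "bs F (concat (map L xs)) = sum_list (map (\<lambda>x. bs F (L x)) xs)"
  by (induction xs) (auto simp: bs_def)
lemma bs_map[simp]: "bs F (map (\<lambda>(a, b). (f a b, g a b)) xs) = bs (\<lambda>a b. F (f a b) (g a b)) xs"
  by (induction xs) (auto simp: bs_def)
lemma bs_add[simp]: "bs (\<lambda>x y. (f x y :: 'k::comm_monoid_add) + g x y) xs = bs f xs + bs g xs"
  by (induction xs) (auto simp: bs_def algebra_simps)
lemma bs_cmult[simp]: "bs (\<lambda>x y. (c::'k::comm_semiring_0) * f x y) xs = c * bs f xs"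
  by (induction xs) (auto simp: bs_def algebra_simps)
lemma bs_cong: "(\<And>x y. (x, y) \<in> set xs \<Longrightarrow> f x y = g x y) \<Longrightarrow> bs f xs = bs g xs"
  by (induction xs) (auto simp: bs_def)

lemma zpow_succ: assumes "bij f" shows "zpow f (n + 1) x = f (zpow f n x)"
proof (cases "n \<ge> 0")
  case True
  then have "nat (n + 1) = Suc (nat n)" by simp
  then show ?thesis using True by (simp add: zpow_def)
next
  case False
  show ?thesis
  proof (cases "n = -1")
    case True then show ?thesis using assms by (simp add: zpow_def bij_is_surj surj_f_inv_f)
  next
    case False2: False
    define j where "j = nat (- n - 2)"
    have j: "nat (- n) = Suc (Suc j)" "nat (- (n + 1)) = Suc j" using False False2 unfolding j_def by auto
    have "zpow f n x = inv f ((inv f ^^ Suc j) x)" using False j by (simp add: zpow_def)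
    then show ?thesis using False False2 j assms by (simp add: zpow_def bij_is_surj surj_f_inv_f del: funpow.simps)
  qed
qed

lemma zpow_pred: assumes "bij f" shows "zpow f (n - 1) x = inv f (zpow f n x)"
proof -
  have "zpow f n x = f (zpow f (n - 1) x)" using zpow_succ[OF assms, of "n - 1"] by simp
  then show ?thesis using assms by (simp add: bij_is_inj)
qed

lemma zpow_0[simp]: "zpow f 0 x = x" by (simp add: zpow_def)
lemma zpow_1: "zpow f 1 x = f x" by (simp add: zpow_def)
lemma zpow_m1: "zpow f (-1) x = inv f x" by (simp add: zpow_def)

lemma zpow_add: assumes "bij f" shows "zpow f a (zpow f b x) = zpow f (a + b) x"
proof (induction a rule: int_induct[where k=0])
  case base then show ?case by simp
next
  case (step1 i) then show ?case using zpow_succ[OF assms] by (metis add.commute add.left_commute)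
next
  case (step2 i) then show ?case using zpow_pred[OF assms] by (metis add.commute add_diff_eq)
qed

lemma zpow_add': "bij f \<Longrightarrow> a + b = c \<Longrightarrow> zpow f a (zpow f b x) = zpow f c x"
  using zpow_add by metis

lemma zpow_induct:
  assumes "bij f" "P id" "\<And>g. P g \<Longrightarrow> P (\<lambda>x. f (g x))" "\<And>g. P g \<Longrightarrow> P (\<lambda>x. inv f (g x))"
  shows "P (zpow f n)"
proof (induction n rule: int_induct[where k=0])
  case base then show ?case using assms(2) by (simp add: id_def zpow_def)
next
  case (step1 i)
  have "zpow f (i + 1) = (\<lambda>x. f (zpow f i x))" using zpow_succ[OF assms(1)] by auto
  then show ?case using assms(3) step1 by simp
next
  case (step2 i)
  have "zpow f (i - 1) = (\<lambda>x. inv f (zpow f i x))" using zpow_pred[OF assms(1)] by auto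
  then show ?case using assms(4) step2 by simp
qed

lemma inv_additive: assumes "bij f" "\<And>x y. f (x + y) = f x + f y"
  shows "inv f (x + y) = inv f x + inv f y"
proof -
  have "f (inv f x + inv f y) = x + y" using assms by (simp add: bij_is_surj surj_f_inv_f)
  then show ?thesis using assms(1) by (metis bij_inv_eq_iff)
qed

lemma inv_scale: assumes "bij f" "\<And>c x. f (s c x) = s c (f x)"
  shows "inv f (s c x) = s c (inv f x)"
proof -
  have "f (s c (inv f x)) = s c x" using assms by (simp add: bij_is_surj surj_f_inv_f)
  then show ?thesis using assms(1) by (metis bij_inv_eq_iff)
qed

lemma inv_mult: assumes "bij f" "\<And>x y. f (mu x y) = mu (f x) (f y)"
  shows "inv f (mu x y) = mu (inv f x) (inv f y)"
proof -
  have "f (mu (inv f x) (inv f y)) = mu x y" using assms by (simp add: bij_is_surj surj_f_inv_f)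
  then show ?thesis using assms(1) by (metis bij_inv_eq_iff)
qed

lemma zpow_props:
  assumes "bij f" "\<And>x y. f (x + y) = f x + f y" "\<And>c x. f (s c x) = s c (f x)"
    "\<And>x y. f (mu x y) = mu (f x) (f y)" "f u = u"
  shows "zpow f n (x + y) = zpow f n x + zpow f n y \<and> zpow f n (s c x) = s c (zpow f n x)
      \<and> zpow f n (mu x y) = mu (zpow f n x) (zpow f n y) \<and> zpow f n u = u"
proof -
  have "inv f (f u) = u" using assms(1) by (simp add: bij_is_inj)
  then have iu: "inv f u = u" using assms(5) by simp
  have ia: "inv f (x + y) = inv f x + inv f y" for x y using inv_additive[of f, OF assms(1,2)] .
  have is': "inv f (s c x) = s c (inv f x)" for c x using inv_scale[of f s, OF assms(1,3)] .
  have im: "inv f (mu x y) = mu (inv f x) (inv f y)" for x y using inv_mult[of f mu, OF assms(1,4)] .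
  define Q where "Q g \<longleftrightarrow> (\<forall>x y. g (x + y) = g x + g y) \<and> (\<forall>c x. g (s c x) = s c (g x))
      \<and> (\<forall>x y. g (mu x y) = mu (g x) (g y)) \<and> g u = u" for g
  have "Q (zpow f n)"
  proof (rule zpow_induct[of f Q, OF assms(1)])
    show "Q id" unfolding Q_def by simp
    fix g assume "Q g"
    then show "Q (\<lambda>x. f (g x))" "Q (\<lambda>x. inv f (g x))"
      unfolding Q_def by (simp_all add: assms(2-5) ia is' im iu)
  qed
  then show ?thesis unfolding Q_def by blast
qed



definition bil :: "('k::field \<Rightarrow> 'a::ab_group_add \<Rightarrow> 'a) \<Rightarrow> ('k \<Rightarrow> 'b::ab_group_add \<Rightarrow> 'b) \<Rightarrow> ('a \<Rightarrow> 'b \<Rightarrow> 'k) \<Rightarrow> bool" where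
  "bil s1 s2 F \<longleftrightarrow> (\<forall>y. lin s1 (\<lambda>x. F x y)) \<and> (\<forall>x. lin s2 (F x))"

lemma linear_rules: "Vector_Spaces.linear s1 s2 f \<Longrightarrow> f (x + y) = f x + f y \<and> f (s1 c x) = s2 c (f x)"
  by (simp add: Vector_Spaces.linear_iff)

lemma bilin_rules: "bilin sa sb sc f \<Longrightarrow> f (x + y) z = f x z + f y z \<and> f (sa c x) z = sc c (f x z)
   \<and> f x (z1 + z2) = f x z1 + f x z2 \<and> f x (sb c z) = sc c (f x z)"
  by (auto simp: bilin_def Vector_Spaces.linear_iff)

locale L4 =
  fixes sH :: "'k::field \<Rightarrow> 'h::ab_group_add \<Rightarrow> 'h"
    and mH :: "'h \<Rightarrow> 'h \<Rightarrow> 'h" and uH :: 'h and al :: "'h \<Rightarrow> 'h"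
    and DH :: "'h \<Rightarrow> ('h \<times> 'h) list" and eH :: "'h \<Rightarrow> 'k"
    and sC :: "'k \<Rightarrow> 'c::ab_group_add \<Rightarrow> 'c"
    and mC :: "'c \<Rightarrow> 'c \<Rightarrow> 'c" and uC :: 'c and be :: "'c \<Rightarrow> 'c"
    and DC :: "'c \<Rightarrow> ('c \<times> 'c) list" and eC :: "'c \<Rightarrow> 'k"
    and act :: "'h \<Rightarrow> 'c \<Rightarrow> 'c" and rho :: "'c \<Rightarrow> ('h \<times> 'c) list"
    and sg sgi :: "'h \<Rightarrow> 'h \<Rightarrow> 'c"
    and m k :: int
  assumes H: "hom_bialgebra sH mH uH DH eH al"
    and C_alg: "hom_algebra sC mC uC be"
    and C_mod: "weak_hom_module_algebra sH DH eH sC mC uC act"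
    and C_comod: "hom_comodule_coalgebra sH mH uH DH eH al sC DC eC be rho"
    and sg_lin: "bilin sH sH sC sg" and sgi_lin: "bilin sH sH sC sgi"
    and sg_inv: "conv_inverse DH eH sC mC uC sg sgi"
    and X: "X_hom_bialgebra sC sH (multX mH DH al mC be act sg m k) (uC, uH)
              (copX mH DH al DC be rho m) (counitX eC eH) be al"
begin

abbreviation "A n \<equiv> zpow al n"
abbreviation "Bz n \<equiv> zpow be n"
abbreviation "TH \<equiv> tprod (lins sH) (lins sH)"
abbreviation "TX \<equiv> tprod (lins sC) (lins sH)"

lemma Halg: "hom_algebra sH mH uH al" and Hco: "hom_coalgebra sH DH eH al"
  using H unfolding hom_bialgebra_def by auto

lemma vH: "Vector_Spaces.vector_space sH" and vC: "Vector_Spaces.vector_space sC"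
  using Halg C_alg unfolding hom_algebra_def by auto

lemma mH_rules: "mH (x + y) z = mH x z + mH y z" "mH (sH c x) z = sH c (mH x z)"
   "mH x (y + z) = mH x y + mH x z" "mH x (sH c y) = sH c (mH x y)"
  using Halg bilin_rules[of sH sH sH mH] unfolding hom_algebra_def by auto
lemma mC_rules: "mC (x + y) z = mC x z + mC y z" "mC (sC c x) z = sC c (mC x z)"
   "mC x (y + z) = mC x y + mC x z" "mC x (sC c y) = sC c (mC x y)"
  using C_alg bilin_rules[of sC sC sC mC] unfolding hom_algebra_def by auto
lemma sg_rules: "sg (x + y) z = sg x z + sg y z" "sg (sH c x) z = sC c (sg x z)"
   "sg x (y + z) = sg x y + sg x z" "sg x (sH c y) = sC c (sg x y)"
  using sg_lin bilin_rules[of sH sH sC sg] by auto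
lemma act_rules: "act (x + y) z = act x z + act y z" "act (sH c x) z = sC c (act x z)"
   "act x (b + d) = act x b + act x d" "act x (sC c' b) = sC c' (act x b)"
  using C_mod bilin_rules[of sH sC sC act] unfolding weak_hom_module_algebra_def by auto
lemma al_rules: "al (x + y) = al x + al y" "al (sH c x) = sH c (al x)"
  using Halg linear_rules[of sH sH al] unfolding hom_algebra_def by auto
lemma be_rules: "be (x + y) = be x + be y" "be (sC c x) = sC c (be x)"
  using C_alg linear_rules[of sC sC be] unfolding hom_algebra_def by auto
lemma linE: "lin sH eH" using Hco lins_iff[OF vH] unfolding hom_coalgebra_def by auto
lemma eH_rules: "eH (x + y) = eH x + eH y" "eH (sH c x) = c * eH x"
  using linE unfolding lin_def by auto

lemma bij_al: "bij al" and al_mult: "al (mH x y) = mH (al x) (al y)" and al_u: "al uH = uH"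
  and mH_u1: "mH x uH = al x" and mH_u2: "mH uH x = al x"
  using Halg unfolding hom_algebra_def by auto
lemma bij_be: "bij be" and be_mult: "be (mC x y) = mC (be x) (be y)" and be_u: "be uC = uC"
  and mC_u1: "mC x uC = be x" and mC_u2: "mC uC x = be x"
  using C_alg unfolding hom_algebra_def by auto
lemma eH_mult: "eH (mH x y) = eH x * eH y" and eH_u: "eH uH = 1"
  using H unfolding hom_bialgebra_def by auto
lemma eH_al: "eH (al x) = eH x" using Hco unfolding hom_coalgebra_def by auto
lemma act_u: "act h uC = sC (eH h) uC" using C_mod unfolding weak_hom_module_algebra_def by auto

lemma A_rules: "A n (x + y) = A n x + A n y" "A n (sH c x) = sH c (A n x)"
  "A n (mH x y) = mH (A n x) (A n y)" "A n uH = uH"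
  using zpow_props[of al sH mH uH n, OF bij_al al_rules al_mult al_u] by auto
lemma Bz_rules: "Bz n (x + y) = Bz n x + Bz n y" "Bz n (sC c x) = sC c (Bz n x)"
  "Bz n (mC x y) = mC (Bz n x) (Bz n y)" "Bz n uC = uC"
  using zpow_props[of be sC mC uC n, OF bij_be be_rules be_mult be_u] by auto

lemma eH_A: "eH (A n x) = eH x"
proof -
  have "\<forall>x. eH (g x) = eH x" if "g = A n" for g
    unfolding that
  proof (rule zpow_induct[OF bij_al])
    fix g assume "\<forall>x. eH (g x) = eH x"
    then show "\<forall>x. eH (inv al (g x)) = eH x"
      by (metis bij_al bij_inv_eq_iff eH_al)
  qed (auto simp: eH_al)
  then show ?thesis by blast
qed

lemmas LS = mH_rules mC_rules sg_rules act_rules al_rules be_rules eH_rules A_rules(1,2) Bz_rules(1,2)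


lemma teqH: "teq TH xs ys \<Longrightarrow> bil sH sH F \<Longrightarrow> bs F xs = bs F ys"
  using teq_bil[OF vH vH] unfolding bil_def by blast
lemma teqX: "teq TX xs ys \<Longrightarrow> bil sC sH F \<Longrightarrow> bs F xs = bs F ys"
  using teq_bil[OF vC vH] unfolding bil_def by blast

definition xeq where "xeq xs ys \<longleftrightarrow> (\<forall>F. bil sC sH F \<longrightarrow> bs F xs = bs F ys)"

lemma xeq_teq: "xeq xs ys \<Longrightarrow> teq TX xs ys"
proof -
  assume xe: "xeq xs ys"
  show ?thesis unfolding teq_def
  proof
    fix P assume "P \<in> TX"
    then obtain F G where P: "P = (\<lambda>(x, y). F x * G y)" "F \<in> lins sC" "G \<in> lins sH"
      unfolding tprod_def by blast
    have "lin sC F" "lin sH G" using P lins_iff vC vH by blast+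
    then have "bil sC sH (\<lambda>x y. F x * G y)" unfolding bil_def lin_def by (auto simp: algebra_simps)
    then show "sum_list (map P xs) = sum_list (map P ys)"
      using xe unfolding xeq_def bs_def P(1) by blast
  qed
qed

lemma teq_xeq: "teq TX xs ys \<Longrightarrow> xeq xs ys" using teqX unfolding xeq_def by blast

lemma xeq_trans: "xeq a b \<Longrightarrow> xeq b c \<Longrightarrow> xeq a c" unfolding xeq_def by auto
lemma xeq_sym: "xeq a b \<Longrightarrow> xeq b a" unfolding xeq_def by auto

lemmas xeq_trans_calc[trans] = xeq_trans

lemma bilD: assumes "bil s1 s2 F"
  shows "F (x + y) z = F x z + F y z" "F (s1 c x) z = c * F x z"
        "F x (z1 + z2) = F x z1 + F x z2" "F x (s2 c z) = c * F x z"
  using assms unfolding bil_def lin_def by auto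

lemma K1: assumes "bil sH sH F"
  shows "bs F (DH (x + y)) = bs F (DH x) + bs F (DH y)" "bs F (DH (sH c x)) = c * bs F (DH x)"
proof -
  have "teq TH (DH (x + y)) (DH x @ DH y)" using Hco unfolding hom_coalgebra_def by auto
  then show "bs F (DH (x + y)) = bs F (DH x) + bs F (DH y)" using teqH assms by simp
  have "teq TH (DH (sH c x)) (map (\<lambda>(p, q). (sH c p, q)) (DH x))" using Hco unfolding hom_coalgebra_def by auto
  then have "bs F (DH (sH c x)) = bs (\<lambda>p q. F (sH c p) q) (DH x)" using teqH assms by simp
  also have "\<dots> = c * bs F (DH x)" using bilD(2)[OF assms] by simp
  finally show "bs F (DH (sH c x)) = c * bs F (DH x)" .
qed

lemma linD: "lin s f \<Longrightarrow> f (x + y) = f x + f y" "lin s f \<Longrightarrow> f (s c x) = c * f x"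
  unfolding lin_def by auto

lemma K2al: assumes "bil sH sH F"
  shows "bs F (DH (al h)) = bs (\<lambda>p q. F (al p) (al q)) (DH h)"
proof -
  have "teq TH (DH (al h)) (map (\<lambda>(p, q). (al p, al q)) (DH h))" using Hco unfolding hom_coalgebra_def by auto
  then show ?thesis using teqH assms by simp
qed

lemma K2: "bil sH sH F \<Longrightarrow> bs F (DH (A n h)) = bs (\<lambda>p q. F (A n p) (A n q)) (DH h)"
proof -
  have "(\<forall>x y. g (x + y) = g x + g y) \<and> (\<forall>c x. g (sH c x) = sH c (g x)) \<and>
        (\<forall>F h. bil sH sH F \<longrightarrow> bs F (DH (g h)) = bs (\<lambda>p q. F (g p) (g q)) (DH h))" if "g = A n" for g
    unfolding that
  proof (rule zpow_induct[OF bij_al])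
    show "(\<forall>x y. id (x + y) = id x + id y) \<and> (\<forall>c x. id (sH c x) = sH c (id x)) \<and>
        (\<forall>F h. bil sH sH F \<longrightarrow> bs F (DH (id h)) = bs (\<lambda>p q. F (id p) (id q)) (DH h))" by simp
  next
    fix g assume ih: "(\<forall>x y. g (x + y) = g x + g y) \<and> (\<forall>c x. g (sH c x) = sH c (g x)) \<and>
        (\<forall>F h. bil sH sH F \<longrightarrow> bs F (DH (g h)) = bs (\<lambda>p q. F (g p) (g q)) (DH h))"
    have "bs F (DH (al (g h))) = bs (\<lambda>p q. F (al (g p)) (al (g q))) (DH h)" if "bil sH sH F" for F h
    proof -
      have "bil sH sH (\<lambda>p q. F (al p) (al q))" using that unfolding bil_def lin_def by (simp add: al_rules)
      then show ?thesis using K2al[OF that] ih by simp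
    qed
    then show "(\<forall>x y. al (g (x + y)) = al (g x) + al (g y)) \<and> (\<forall>c x. al (g (sH c x)) = sH c (al (g x))) \<and>
        (\<forall>F h. bil sH sH F \<longrightarrow> bs F (DH (al (g h))) = bs (\<lambda>p q. F (al (g p)) (al (g q))) (DH h))"
      using ih by (simp add: al_rules)
  next
    fix g assume ih: "(\<forall>x y. g (x + y) = g x + g y) \<and> (\<forall>c x. g (sH c x) = sH c (g x)) \<and>
        (\<forall>F h. bil sH sH F \<longrightarrow> bs F (DH (g h)) = bs (\<lambda>p q. F (g p) (g q)) (DH h))"
    have ia: "inv al (x + y) = inv al x + inv al y" for x y using inv_additive[OF bij_al] al_rules by blast
    have is': "inv al (sH c x) = sH c (inv al x)" for c x using inv_scale[of al sH, OF bij_al] al_rules by blast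
    have ii: "inv al (al x) = x" for x using bij_al by (simp add: bij_is_inj)
    have ii2: "al (inv al x) = x" for x using bij_al by (simp add: bij_is_surj surj_f_inv_f)
    have "bs F (DH (inv al (g h))) = bs (\<lambda>p q. F (inv al (g p)) (inv al (g q))) (DH h)" if "bil sH sH F" for F h
    proof -
      define F' where "F' p q = F (inv al p) (inv al q)" for p q
      have bF': "bil sH sH F'" using that unfolding bil_def lin_def F'_def by (simp add: ia is')
      have "bs F (DH (inv al (g h))) = bs (\<lambda>p q. F' (al p) (al q)) (DH (inv al (g h)))"
        unfolding F'_def ii by simp
      also have "\<dots> = bs F' (DH (al (inv al (g h))))" using K2al[OF bF', of "inv al (g h)"] by simp
      also have "\<dots> = bs F' (DH (g h))" using ii2 by simp
      also have "\<dots> = bs (\<lambda>p q. F' (g p) (g q)) (DH h)" using ih bF' by blast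
      finally show ?thesis unfolding F'_def .
    qed
    then show "(\<forall>x y. inv al (g (x + y)) = inv al (g x) + inv al (g y)) \<and> (\<forall>c x. inv al (g (sH c x)) = sH c (inv al (g x))) \<and>
        (\<forall>F h. bil sH sH F \<longrightarrow> bs F (DH (inv al (g h))) = bs (\<lambda>p q. F (inv al (g p)) (inv al (g q))) (DH h))"
      using ih by (simp add: ia is')
  qed
  then show "bil sH sH F \<Longrightarrow> bs F (DH (A n h)) = bs (\<lambda>p q. F (A n p) (A n q)) (DH h)" by blast
qed

lemma K3: "bil sH sH F \<Longrightarrow> bs F (DH uH) = F uH uH"
proof -
  assume b: "bil sH sH F"
  have "teq TH (DH uH) [(uH, uH)]" using H unfolding hom_bialgebra_def by auto
  then show ?thesis using teqH[OF _ b] by simp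
qed

lemma K4: assumes f: "lin sH f"
  shows "bs (\<lambda>p q. eH p * f q) (DH h) = f (A (-1) h)" "bs (\<lambda>p q. eH q * f p) (DH h) = f (A (-1) h)"
proof -
  have c: "sum_list [sH (eH q) p. (p, q) \<leftarrow> DH h] = inv al h" "sum_list [sH (eH p) q. (p, q) \<leftarrow> DH h] = inv al h"
    using Hco unfolding hom_coalgebra_def by auto
  have g1: "f (sum_list (map (\<lambda>(p, q). sH (eH p) q) xs)) = bs (\<lambda>p q. eH p * f q) xs" for xs
    by (induction xs) (auto simp: linD[OF f] lin_0[OF f])
  have g2: "f (sum_list (map (\<lambda>(p, q). sH (eH q) p) xs)) = bs (\<lambda>p q. eH q * f p) xs" for xs
    by (induction xs) (auto simp: linD[OF f] lin_0[OF f])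
  show "bs (\<lambda>p q. eH p * f q) (DH h) = f (A (-1) h)" using c(2) g1[of "DH h"] by (simp add: zpow_m1)
  show "bs (\<lambda>p q. eH q * f p) (DH h) = f (A (-1) h)" using c(1) g2[of "DH h"] by (simp add: zpow_m1)
qed


lemma K1s: "bil sH sH F \<Longrightarrow> bs F (DH (x + y)) = bs F (DH x) + bs F (DH y)"
   "bil sH sH F \<Longrightarrow> bs F (DH (sH c x)) = c * bs F (DH x)" using K1 by auto

abbreviation "mu \<equiv> multX mH DH al mC be act sg m k"
abbreviation "ph \<equiv> phir mH DH al mC sg m k"

lemma M1: assumes b: "bil sC sH F"
  shows "bs F (mu [(a, h)] [(uC, g)]) =
    bs (\<lambda>h1 h2. bs (\<lambda>g1 g2. F (mC a (be (sg (A k h1) (A k g1)))) (al (mH h2 g2))) (DH g)) (DH h)"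
proof -
  have "bs F (mu [(a, h)] [(uC, g)]) =
    bs (\<lambda>h1 h2. bs (\<lambda>p1 p2. eH p1 * bs (\<lambda>g1 g2. F (mC a (be (sg (A (k+1) p2) (A k g1)))) (al (mH h2 g2))) (DH g)) (DH h1)) (DH h)"
    unfolding multX_def by (simp add: Bz_rules act_u eH_A mC_rules mC_u2 bilD[OF b])
  also have "\<dots> = bs (\<lambda>h1 h2. bs (\<lambda>g1 g2. F (mC a (be (sg (A (k+1) (A (-1) h1)) (A k g1)))) (al (mH h2 g2))) (DH g)) (DH h)"
    by (simp add: K4 lin_def bil_def LS bilD[OF b] K1s)
  also have "\<dots> = bs (\<lambda>h1 h2. bs (\<lambda>g1 g2. F (mC a (be (sg (A k h1) (A k g1)))) (al (mH h2 g2))) (DH g)) (DH h)"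
    by (simp add: zpow_add'[OF bij_al])
  finally show ?thesis .
qed


lemma K4b: assumes f: "lin sH f"
  shows "bs (\<lambda>p q. f q * eH p) (DH h) = f (A (-1) h)" "bs (\<lambda>p q. f p * eH q) (DH h) = f (A (-1) h)"
  using K4[OF f, of h] by (simp_all add: mult.commute)

lemma A_comp: "A a (A b x) = A (a + b) x" using zpow_add[OF bij_al] by blast
lemma Bz_comp: "Bz a (Bz b x) = Bz (a + b) x" using zpow_add[OF bij_be] by blast
lemma al_A: "al (A n x) = A (n + 1) x" using zpow_succ[OF bij_al] by metis
lemma A_al: "A n (al x) = A (n + 1) x" using zpow_add[OF bij_al, of n 1] zpow_1 by metis
lemma be_Bz: "be (Bz n x) = Bz (n + 1) x" using zpow_succ[OF bij_be] by metis
lemma Bz_be: "Bz n (be x) = Bz (n + 1) x" using zpow_add[OF bij_be, of n 1] zpow_1 by metis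

lemma bs_xi: "bs F (xiX be al xs) = bs (\<lambda>c q. F (be c) (al q)) xs"
  unfolding xiX_def xi1_def by simp

lemma Xassoc: "teq TX (mu (xiX be al x) (mu y z)) (mu (mu x y) (xiX be al z))"
  and Xmult: "teq TX (xiX be al (mu x y)) (mu (xiX be al x) (xiX be al y))"
  and Xu1: "teq TX (mu x [(uC, uH)]) (xiX be al x)" and Xu2: "teq TX (mu [(uC, uH)] x) (xiX be al x)"
  using X unfolding X_hom_bialgebra_def Let_def by auto

lemma bil_prod: "lin sC G \<Longrightarrow> bil sC sH (\<lambda>c q. G c * eH q)"
  unfolding bil_def lin_def by (auto simp: eH_rules algebra_simps)

lemma P2: assumes G: "lin sC G" shows "G (be (sg u v)) = G (sg (al u) (al v))"
proof -
  have gen: "Fc (be (be (be (sg (A (k - 1) h) (A (k - 1) l))))) = Fc (be (be (sg (A k h) (A k l))))"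
    if Fc: "lin sC Fc" for Fc h l
  proof -
    let ?P = "\<lambda>c q. Fc c * eH q"
    have bP: "bil sC sH ?P" by (rule bil_prod[OF Fc])
    have bP': "bil sC sH (\<lambda>c q. ?P (be c) (al q))" using Fc unfolding bil_def lin_def
      by (auto simp: eH_rules be_rules eH_al algebra_simps)
    have rw: "x * (eH a * eH b) = eH a * (eH b * x)" for x a b by (simp add: ac_simps)
    have "bs ?P (xiX be al (mu [(uC, h)] [(uC, l)])) = bs ?P (mu (xiX be al [(uC, h)]) (xiX be al [(uC, l)]))"
      using teqX[OF Xmult bP] .
    moreover have "bs ?P (xiX be al (mu [(uC, h)] [(uC, l)])) =
       bs (\<lambda>h1 h2. eH h2 * bs (\<lambda>l1 l2. eH l2 * Fc (be (be (be (sg (A k h1) (A k l1)))))) (DH l)) (DH h)"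
      unfolding bs_xi M1[OF bP'] by (simp add: mC_u2 eH_al eH_mult rw)
    moreover have "\<dots> = Fc (be (be (be (sg (A k (A (-1) h)) (A k (A (-1) l))))))"
      by (simp add: K4 lin_def LS linD[OF Fc])
    moreover have "bs ?P (mu (xiX be al [(uC, h)]) (xiX be al [(uC, l)])) =
       bs (\<lambda>h1 h2. eH h2 * bs (\<lambda>l1 l2. eH l2 * Fc (be (be (sg (A k h1) (A k l1))))) (DH (al l))) (DH (al h))"
      unfolding xiX_def xi1_def using M1[OF bP] by (simp add: mC_u2 eH_al eH_mult rw be_u)
    moreover have "\<dots> = Fc (be (be (sg (A k (A (-1) (al h))) (A k (A (-1) (al l))))))"
      by (simp add: K4 lin_def LS linD[OF Fc])
    ultimately show ?thesis by (simp add: A_comp A_al)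
  qed
  define Fc where "Fc c = G (Bz (-2) c)" for c
  have Fc: "lin sC Fc" using G unfolding Fc_def lin_def by (simp add: Bz_rules)
  have "Fc (be (be (be (sg (A (k - 1) (A (1 - k) u)) (A (k - 1) (A (1 - k) v)))))) =
        Fc (be (be (sg (A k (A (1 - k) u)) (A k (A (1 - k) v)))))" by (rule gen[OF Fc])
  then show ?thesis unfolding Fc_def
    by (simp add: A_comp Bz_comp Bz_be zpow_1)
qed


lemma P3: assumes G: "lin sC G" shows "G (sg uH v) = eH v * G uC"
proof -
  have gen: "Fc (be (be (sg uH (A (k - 1) g)))) = Fc uC * eH g" if Fc: "lin sC Fc" for Fc g
  proof -
    let ?P = "\<lambda>c q. Fc c * eH q"
    have bP: "bil sC sH ?P" by (rule bil_prod[OF Fc])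
    have "bs ?P (mu [(uC, uH)] [(uC, g)]) = bs ?P (xiX be al [(uC, g)])"
      using teqX[OF Xu2 bP] .
    moreover have "bs ?P (mu [(uC, uH)] [(uC, g)]) =
       bs (\<lambda>h1 h2. bs (\<lambda>g1 g2. Fc (be (be (sg (A k h1) (A k g1)))) * eH (al (mH h2 g2))) (DH g)) (DH uH)"
      using M1[OF bP] by (simp add: mC_u2)
    moreover have "\<dots> = bs (\<lambda>g1 g2. Fc (be (be (sg uH (A k g1)))) * eH g2) (DH g)"
      by (simp add: K3 bil_def lin_def LS linD[OF Fc] eH_al eH_mult eH_u A_rules(4) algebra_simps)
    moreover have "\<dots> = Fc (be (be (sg uH (A k (A (-1) g)))))"
      by (simp add: K4b lin_def LS linD[OF Fc])
    moreover have "bs ?P (xiX be al [(uC, g)]) = Fc uC * eH g"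
      by (simp add: xiX_def xi1_def be_u eH_al)
    ultimately show ?thesis by (simp add: A_comp)
  qed
  define Fc where "Fc c = G (Bz (-2) c)" for c
  have Fc: "lin sC Fc" using G unfolding Fc_def lin_def by (simp add: Bz_rules)
  have "Fc (be (be (sg uH (A (k - 1) (A (1 - k) v))))) = Fc uC * eH (A (1 - k) v)" by (rule gen[OF Fc])
  then show ?thesis unfolding Fc_def
    by (simp add: A_comp Bz_comp Bz_be zpow_1 eH_A Bz_rules(4))
qed

lemma bs_cc: "bs F (concat (concat (map (\<lambda>(a, b). map (\<lambda>(c, d). P a b c d) ys) xs))) =
   bs (\<lambda>a b. bs (\<lambda>c d. bs F (P a b c d)) ys) xs"
proof (induction xs)
  case (Cons x xs)
  have "bs F (concat (map (\<lambda>(c, d). P a b c d) ys)) = bs (\<lambda>c d. bs F (P a b c d)) ys" for a b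
    by (induction ys) auto
  then show ?case using Cons by (cases x) simp
qed simp

lemma bs_zero[simp]: "bs (\<lambda>a b. 0) xs = 0" by (induction xs) auto

lemma bs_swap: "bs (\<lambda>a b. bs (\<lambda>c d. (f a b c d :: 'k)) ys) xs = bs (\<lambda>c d. bs (\<lambda>a b. f a b c d) xs) ys"
  by (induction xs) auto

lemma mu_left: "bs F (mu x y) = bs (\<lambda>a h. bs F (mu [(a, h)] y)) x"
  unfolding multX_def by simp

lemma mu_right: "bs (F :: 'c \<Rightarrow> 'h \<Rightarrow> 'k) (mu z y) = bs (\<lambda>b g. bs F (mu z [(b, g)])) y"
  unfolding multX_def by (simp add: bs_swap[of _ y z])

lemma CongL: assumes "xeq y y'" shows "xeq (mu y [(uC, g)]) (mu y' [(uC, g)])"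
  unfolding xeq_def
proof (intro allI impI)
  fix F assume b: "bil sC sH F"
  let ?T = "\<lambda>a h. bs (\<lambda>h1 h2. bs (\<lambda>g1 g2. F (mC a (be (sg (A k h1) (A k g1)))) (al (mH h2 g2))) (DH g)) (DH h)"
  have bP: "bil sH sH (\<lambda>h1 h2. bs (\<lambda>g1 g2. F (mC a (be (sg (A k h1) (A k g1)))) (al (mH h2 g2))) (DH g))" for a
    by (simp add: bil_def lin_def LS bilD[OF b])
  have l1: "lin sC (\<lambda>a. ?T a h)" for h by (simp add: lin_def LS bilD[OF b])
  have l2: "lin sH (?T a)" for a using K1[OF bP] by (simp add: lin_def)
  have bT: "bil sC sH ?T" using l1 l2 unfolding bil_def by blast
  have e: "bs F (mu x [(uC, g)]) = bs ?T x" for x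
    by (subst mu_left[of F]) (simp only: M1[OF b])
  show "bs F (mu y [(uC, g)]) = bs F (mu y' [(uC, g)])"
    using assms bT unfolding xeq_def e by blast
qed

lemma CongR: assumes "xeq y y'" shows "xeq (mu z y) (mu z y')"
  unfolding xeq_def
proof (intro allI impI)
  fix F assume b: "bil sC sH F"
  have bT: "bil sC sH (\<lambda>a h. bs F (mu z [(a, h)]))"
    unfolding multX_def by (simp add: bil_def lin_def LS bilD[OF b] K1s)
  show "bs F (mu z y) = bs F (mu z y')"
    using assms bT unfolding xeq_def by (subst (1 2) mu_right[of F]) blast
qed


lemma P2F: "bil sC sH F \<Longrightarrow> F (mC a (be (sg u v))) q = F (mC a (sg (al u) (al v))) q"
  by (rule P2[where G = "\<lambda>c. F (mC a c) q"]) (simp add: lin_def bilD mC_rules)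

lemma P2F': "bil sC sH F \<Longrightarrow> F (be (be (sg u v))) q = F (be (sg (al u) (al v))) q"
  by (rule P2[where G = "\<lambda>c. F (be c) q"]) (simp add: lin_def bilD be_rules)

lemma PhiMult: "xeq (ph x l) (mu x [(uC, A (-m) l)])"
  unfolding xeq_def
proof (intro allI impI)
  fix F assume b: "bil sC sH F"
  have "bs F (ph x l) = bs (\<lambda>a h. bs (\<lambda>h1 h2. bs (\<lambda>l1 l2. F (mC a (sg (A (k+1) h1) (A (k+1-m) l1))) (mH (al h2) (A (1-m) l2))) (DH l)) (DH h)) x"
    by (simp add: phir_def)
  moreover have "bs F (mu x [(uC, A (-m) l)]) = bs (\<lambda>a h. bs (\<lambda>h1 h2. bs (\<lambda>l1 l2. F (mC a (sg (A (k+1) h1) (A (k+1-m) l1))) (mH (al h2) (A (1-m) l2))) (DH l)) (DH h)) x"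
    apply (subst mu_left)
    apply (simp add: M1[OF b] P2F[OF b] K2 bil_def lin_def LS bilD[OF b] al_A A_comp al_mult A_al)
    done
  ultimately show "bs F (ph x l) = bs F (mu x [(uC, A (-m) l)])" by simp
qed


lemma P3F: "bil sC sH F \<Longrightarrow> F (mC s (be (sg uH v))) q = eH v * F (be s) q"
proof -
  assume b: "bil sC sH F"
  have "F (mC s (be (sg uH v))) q = eH v * F (mC s (be uC)) q"
    by (rule P3[where G = "\<lambda>c. F (mC s (be c)) q"]) (simp add: lin_def bilD[OF b] be_rules mC_rules)
  then show ?thesis by (simp add: be_u mC_u1)
qed

lemma ph_sig: "bil sC sH F \<Longrightarrow> bs F (ph [(s, uH)] w) = F (be s) (A (1 - m) w)"
proof -
  assume b: "bil sC sH F"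
  have "bs F (ph [(s, uH)] w) = bs F (mu [(s, uH)] [(uC, A (-m) w)])"
    using PhiMult b unfolding xeq_def by blast
  also have "\<dots> = bs (\<lambda>g1 g2. eH g1 * F (be s) (al (al g2))) (DH (A (-m) w))"
    by (simp add: M1[OF b] K3 bil_def lin_def LS bilD[OF b] A_rules(4) P3F[OF b] eH_A mH_u2)
  also have "\<dots> = F (be s) (al (al (A (-1) (A (-m) w))))"
    by (simp add: K4 lin_def LS bilD[OF b])
  also have "\<dots> = F (be s) (A (1 - m) w)"
    by (simp add: al_A A_comp)
  finally show ?thesis .
qed

abbreviation "W l g \<equiv> concat [ph (sigbar uH al sg m k l1 g1) (mH l2 g2). (l1, l2) \<leftarrow> DH l, (g1, g2) \<leftarrow> DH g]"

lemma R3: "xeq (mu [(uC, A (-m) l)] [(uC, A (-m) g)]) (W l g)"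
  unfolding xeq_def
proof (intro allI impI)
  fix F assume b: "bil sC sH F"
  have "bs F (W l g) = bs (\<lambda>l1 l2. bs (\<lambda>g1 g2. F (be (sg (A (k+1-m) l1) (A (k+1-m) g1))) (A (1-m) (mH l2 g2))) (DH g)) (DH l)"
    by (simp add: bs_cc sigbar_def ph_sig[OF b])
  moreover have "bs F (mu [(uC, A (-m) l)] [(uC, A (-m) g)]) = bs (\<lambda>l1 l2. bs (\<lambda>g1 g2. F (be (sg (A (k+1-m) l1) (A (k+1-m) g1))) (A (1-m) (mH l2 g2))) (DH g)) (DH l)"
    by (simp add: M1[OF b] mC_u2 P2F'[OF b] K2 bil_def lin_def LS bilD[OF b] al_A A_comp al_mult A_al A_rules(3))
  ultimately show "bs F (mu [(uC, A (-m) l)] [(uC, A (-m) g)]) = bs F (W l g)" by simp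
qed

lemma main:
  "(\<forall>l g x. teq (tprod (lins sC) (lins sH))
            (phir mH DH al mC sg m k (phir mH DH al mC sg m k x l) (al g))
            (multX mH DH al mC be act sg m k (xiX be al x)
               (concat [phir mH DH al mC sg m k (sigbar uH al sg m k l1 g1) (mH l2 g2).
                          (l1, l2) \<leftarrow> DH l, (g1, g2) \<leftarrow> DH g])))
       \<and> (\<forall>x. teq (tprod (lins sC) (lins sH)) (phir mH DH al mC sg m k x uH) (xiX be al x))"
proof (intro conjI allI)
  fix l g x
  let ?y = "[(uC, A (-m) l)]" and ?z = "[(uC, A (-m) g)]"
  have z: "[(uC, A (-m) (al g))] = xiX be al ?z"
    by (simp add: xiX_def xi1_def be_u al_A A_al)
  have "xeq (ph (ph x l) (al g)) (mu (ph x l) [(uC, A (-m) (al g))])" by (rule PhiMult)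
  also have "xeq \<dots> (mu (mu x ?y) [(uC, A (-m) (al g))])" by (rule CongL[OF PhiMult])
  also have "\<dots> = mu (mu x ?y) (xiX be al ?z)" unfolding z ..
  also have "xeq \<dots> (mu (xiX be al x) (mu ?y ?z))" by (rule xeq_sym[OF teq_xeq[OF Xassoc]])
  also have "xeq \<dots> (mu (xiX be al x) (W l g))" by (rule CongR[OF R3])
  finally show "teq TX (ph (ph x l) (al g)) (mu (xiX be al x) (W l g))" by (rule xeq_teq)
next
  fix x
  have "xeq (ph x uH) (mu x [(uC, uH)])" using PhiMult[of x uH] by (simp add: A_rules(4))
  also have "xeq \<dots> (xiX be al x)" by (rule teq_xeq[OF Xu1])
  finally show "teq TX (ph x uH) (xiX be al x)" by (rule xeq_teq)
qed

end

theorem lemma4p8: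
  fixes sH :: "'k::field \<Rightarrow> 'h::ab_group_add \<Rightarrow> 'h"
    and mH :: "'h \<Rightarrow> 'h \<Rightarrow> 'h" and uH :: 'h and al :: "'h \<Rightarrow> 'h"
    and DH :: "'h \<Rightarrow> ('h \<times> 'h) list" and eH :: "'h \<Rightarrow> 'k"
    and sC :: "'k \<Rightarrow> 'c::ab_group_add \<Rightarrow> 'c"
    and mC :: "'c \<Rightarrow> 'c \<Rightarrow> 'c" and uC :: 'c and be :: "'c \<Rightarrow> 'c"
    and DC :: "'c \<Rightarrow> ('c \<times> 'c) list" and eC :: "'c \<Rightarrow> 'k"
    and act :: "'h \<Rightarrow> 'c \<Rightarrow> 'c" and rho :: "'c \<Rightarrow> ('h \<times> 'c) list"
    and sg sgi :: "'h \<Rightarrow> 'h \<Rightarrow> 'c"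
    and m k :: int
  assumes H: "hom_bialgebra sH mH uH DH eH al"
    and C_alg: "hom_algebra sC mC uC be"
    and C_mod: "weak_hom_module_algebra sH DH eH sC mC uC act"
    and C_comod: "hom_comodule_coalgebra sH mH uH DH eH al sC DC eC be rho"
    and sg_lin: "bilin sH sH sC sg" and sgi_lin: "bilin sH sH sC sgi"
    and sg_inv: "conv_inverse DH eH sC mC uC sg sgi"
    and X: "X_hom_bialgebra sC sH (multX mH DH al mC be act sg m k) (uC, uH)
              (copX mH DH al DC be rho m) (counitX eC eH) be al"
  shows "(\<forall>l g x. teq (tprod (lins sC) (lins sH))
            (phir mH DH al mC sg m k (phir mH DH al mC sg m k x l) (al g))
            (multX mH DH al mC be act sg m k (xiX be al x)
               (concat [phir mH DH al mC sg m k (sigbar uH al sg m k l1 g1) (mH l2 g2).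
                          (l1, l2) \<leftarrow> DH l, (g1, g2) \<leftarrow> DH g])))
       \<and> (\<forall>x. teq (tprod (lins sC) (lins sH)) (phir mH DH al mC sg m k x uH) (xiX be al x))"
  by (rule L4.main[OF L4.intro[OF H C_alg C_mod C_comod sg_lin sgi_lin sg_inv X]])

end
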